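(* Let $G$ be a $2$-connected plane graph and let $B$ be a triangular-block of $G$ whose outer face is a hole. Let $C$ be the outer cycle of $B$ and let $P$ be a $C$-path in $B$. Then some edge of $P$ is contained in two facial triangles of $G$.
   Context: A facial triangle of a plane graph $G$ is a face of $G$ bounded by a triangle. Two facial triangles $F,F'$ are equivalent if there is a sequence $F=F_1,\dots,F_k=F'$ of facial triangles of $G$ such that $F_i$ and $F_{i+1}$ share an edge for each $i$. For an edge $e$ of $G$: if $e$ lies in no facial triangle, the triangular-block $B(e)$ is the two-vertex subgraph consisting of $e$ and its ends; otherwise $B(e)$ is the union of all facial triangles equivalent to some facial triangle containing $e$. The triangular-blocks of $G$ are the subgraphs $B(e)$, $e\in E(G)$, each regarded as a plane graph with the embedding inherited from $G$. A hole of a triangular-block $B$ is a face of $B$ that is not a face of $G$. For a subgraph $H$ of $G$, an $H$-path is a path in $G$ with both ends in $H$ that is internally disjoint from $H$. *)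

theory Defs
  imports "HOL-Analysis.Analysis"
begin

(* A plane graph: vertices are points of the complex plane, edges are 2-element
   vertex sets, and emb e is an arc drawing edge e. *)

definition drawing :: "(complex set \<Rightarrow> real \<Rightarrow> complex) \<Rightarrow> complex set \<Rightarrow> complex set set \<Rightarrow> complex set" where
  "drawing emb W F = W \<union> (\<Union>e\<in>F. path_image (emb e))"

definition plane_graph :: "complex set \<Rightarrow> complex set set \<Rightarrow> (complex set \<Rightarrow> real \<Rightarrow> complex) \<Rightarrow> bool" where
  "plane_graph V E emb \<longleftrightarrow> finite V
     \<and> (\<forall>e\<in>E. \<exists>u v. e = {u, v} \<and> u \<noteq> v \<and> u \<in> V \<and> v \<in> V)
     \<and> (\<forall>e\<in>E. arc (emb e) \<and> {pathstart (emb e), pathfinish (emb e)} = e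
               \<and> path_image (emb e) \<inter> V = e)
     \<and> (\<forall>e\<in>E. \<forall>e'\<in>E. e \<noteq> e' \<longrightarrow> path_image (emb e) \<inter> path_image (emb e') \<subseteq> e \<inter> e')"

definition faces :: "(complex set \<Rightarrow> real \<Rightarrow> complex) \<Rightarrow> complex set \<Rightarrow> complex set set \<Rightarrow> complex set set" where
  "faces emb W F = components (- drawing emb W F)"

definition connected_on :: "complex set \<Rightarrow> complex set set \<Rightarrow> bool" where
  "connected_on W E \<longleftrightarrow>
     (\<forall>u\<in>W. \<forall>v\<in>W. (\<lambda>x y. x \<in> W \<and> y \<in> W \<and> {x, y} \<in> E)\<^sup>*\<^sup>* u v)"

definition two_connected :: "complex set \<Rightarrow> complex set set \<Rightarrow> bool" where
  "two_connected V E \<longleftrightarrow> card V \<ge> 3 \<and> connected_on V E \<and> (\<forall>x\<in>V. connected_on (V - {x}) E)"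

definition facial_triangle :: "complex set \<Rightarrow> complex set set \<Rightarrow> (complex set \<Rightarrow> real \<Rightarrow> complex) \<Rightarrow> complex set \<Rightarrow> bool" where
  "facial_triangle V E emb f \<longleftrightarrow> f \<in> faces emb V E \<and>
     (\<exists>a b c. a \<noteq> b \<and> b \<noteq> c \<and> a \<noteq> c \<and> {a, b} \<in> E \<and> {b, c} \<in> E \<and> {a, c} \<in> E \<and>
        frontier f = drawing emb {a, b, c} {{a, b}, {b, c}, {a, c}})"

definition tri_edges :: "complex set set \<Rightarrow> (complex set \<Rightarrow> real \<Rightarrow> complex) \<Rightarrow> complex set \<Rightarrow> complex set set" where
  "tri_edges E emb f = {e \<in> E. path_image (emb e) \<subseteq> frontier f}"

definition ft_adj :: "complex set \<Rightarrow> complex set set \<Rightarrow> (complex set \<Rightarrow> real \<Rightarrow> complex) \<Rightarrow> complex set \<Rightarrow> complex set \<Rightarrow> bool" where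
  "ft_adj V E emb f f' \<longleftrightarrow> facial_triangle V E emb f \<and> facial_triangle V E emb f' \<and>
     tri_edges E emb f \<inter> tri_edges E emb f' \<noteq> {}"

definition block_edges :: "complex set \<Rightarrow> complex set set \<Rightarrow> (complex set \<Rightarrow> real \<Rightarrow> complex) \<Rightarrow> complex set \<Rightarrow> complex set set" where
  "block_edges V E emb e =
     (if \<not> (\<exists>f. facial_triangle V E emb f \<and> e \<in> tri_edges E emb f) then {e}
      else \<Union>{tri_edges E emb f' | f'. \<exists>f. facial_triangle V E emb f \<and> e \<in> tri_edges E emb f
                                          \<and> (ft_adj V E emb)\<^sup>*\<^sup>* f f'})"

definition triangular_block :: "complex set \<Rightarrow> complex set set \<Rightarrow> (complex set \<Rightarrow> real \<Rightarrow> complex) \<Rightarrow> complex set \<Rightarrow> complex set set \<Rightarrow> bool" where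
  "triangular_block V E emb VB EB \<longleftrightarrow>
     (\<exists>e\<in>E. EB = block_edges V E emb e \<and> VB = \<Union>EB)"

definition cyc_edges :: "complex list \<Rightarrow> complex set set" where
  "cyc_edges cs = {{cs ! i, cs ! ((i + 1) mod length cs)} | i. i < length cs}"

definition is_cycle :: "complex set set \<Rightarrow> complex list \<Rightarrow> bool" where
  "is_cycle E cs \<longleftrightarrow> length cs \<ge> 3 \<and> distinct cs \<and> cyc_edges cs \<subseteq> E"

definition path_edges :: "complex list \<Rightarrow> complex set set" where
  "path_edges ps = {{ps ! i, ps ! Suc i} | i. Suc i < length ps}"

definition is_path :: "complex set set \<Rightarrow> complex list \<Rightarrow> bool" where
  "is_path E ps \<longleftrightarrow> ps \<noteq> [] \<and> distinct ps \<and> path_edges ps \<subseteq> E"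

definition is_H_path :: "complex set set \<Rightarrow> complex set \<Rightarrow> complex set set \<Rightarrow> complex list \<Rightarrow> bool" where
  "is_H_path E W F ps \<longleftrightarrow> is_path E ps \<and> length ps \<ge> 2 \<and> hd ps \<in> W \<and> last ps \<in> W
     \<and> (\<forall>i. 0 < i \<and> i < length ps - 1 \<longrightarrow> ps ! i \<notin> W)
     \<and> path_edges ps \<inter> F = {}"

end

theory Submission
  imports Defs
begin

lemma path_edges_Cons2: "path_edges (u#v#r) = insert {u,v} (path_edges (v#r))"
proof -
  have "path_edges (u#v#r) = {{(u#v#r) ! i, (u#v#r) ! Suc i} | i. Suc i < length (u#v#r)}"
    by (simp add: path_edges_def)
  also have "\<dots> = insert {u,v} {{(v#r) ! i, (v#r) ! Suc i} | i. Suc i < length (v#r)}"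
  proof (rule set_eqI, rule iffI)
    fix x assume "x \<in> {{(u#v#r) ! i, (u#v#r) ! Suc i} | i. Suc i < length (u#v#r)}"
    then obtain i where i: "x = {(u#v#r) ! i, (u#v#r) ! Suc i}" "Suc i < length (u#v#r)" by blast
    show "x \<in> insert {u,v} {{(v#r) ! i, (v#r) ! Suc i} | i. Suc i < length (v#r)}"
    proof (cases i)
      case 0 then show ?thesis using i by simp
    next
      case (Suc k)
      then have "x = {(v#r) ! k, (v#r) ! Suc k} \<and> Suc k < length (v#r)" using i by simp
      then show ?thesis by blast
    qed
  next
    fix x assume "x \<in> insert {u,v} {{(v#r) ! i, (v#r) ! Suc i} | i. Suc i < length (v#r)}"
    then show "x \<in> {{(u#v#r) ! i, (u#v#r) ! Suc i} | i. Suc i < length (u#v#r)}"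
    proof
      assume "x = {u,v}"
      then have "x = {(u#v#r) ! 0, (u#v#r) ! Suc 0} \<and> Suc 0 < length (u#v#r)" by simp
      then show ?thesis by blast
    next
      assume "x \<in> {{(v#r) ! i, (v#r) ! Suc i} | i. Suc i < length (v#r)}"
      then obtain i where "x = {(v#r) ! i, (v#r) ! Suc i}" "Suc i < length (v#r)" by blast
      then have "x = {(u#v#r) ! Suc i, (u#v#r) ! Suc (Suc i)} \<and> Suc (Suc i) < length (u#v#r)" by simp
      then show ?thesis by blast
    qed
  qed
  finally show ?thesis by (simp add: path_edges_def)
qed

lemma path_edges_single: "path_edges [u] = {}" and path_edges_Nil: "path_edges [] = {}"
  by (auto simp: path_edges_def)

lemma path_edges_rev: "path_edges (rev L) = path_edges L"
proof -
  have *: "path_edges (rev L) \<subseteq> path_edges L" for L :: "complex list"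
  proof
    fix x assume "x \<in> path_edges (rev L)"
    then obtain i where i: "x = {rev L ! i, rev L ! Suc i}" "Suc i < length L"
      by (auto simp: path_edges_def)
    let ?k = "length L - Suc (Suc i)"
    have "rev L ! i = L ! Suc ?k" "rev L ! Suc i = L ! ?k" using i
      by (auto simp: rev_nth Suc_diff_Suc)
    then have "x = {L ! ?k, L ! Suc ?k}" using i by auto
    moreover have "Suc ?k < length L" using i by auto
    ultimately show "x \<in> path_edges L" by (auto simp: path_edges_def)
  qed
  show ?thesis using *[of L] *[of "rev L"] by auto
qed

lemma path_edges_sub_set: "e \<in> path_edges L \<Longrightarrow> e \<subseteq> set L"
  by (auto simp: path_edges_def)

lemma set_sub_path_edges: "2 \<le> length L \<Longrightarrow> set L \<subseteq> \<Union>(path_edges L)"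
proof
  fix x assume "2 \<le> length L" "x \<in> set L"
  then obtain i where i: "i < length L" "x = L ! i" by (auto simp: in_set_conv_nth)
  show "x \<in> \<Union>(path_edges L)"
  proof (cases "Suc i < length L")
    case True then show ?thesis using i by (auto simp: path_edges_def)
  next
    case False
    then have "i = Suc (i - 1)" "Suc (i-1) < length L" using i \<open>2 \<le> length L\<close> by auto
    then have "{L ! (i-1), L ! i} \<in> path_edges L" unfolding path_edges_def by (metis (mono_tags) mem_Collect_eq)
    then show ?thesis using i by auto
  qed
qed

lemma path_edges_hd:
  assumes "distinct L" "{hd L, w} \<in> path_edges L"
  shows "w = L ! 1"
proof -
  obtain i where i: "{hd L, w} = {L ! i, L ! Suc i}" "Suc i < length L"
    using assms by (auto simp: path_edges_def)
  have hd: "hd L = L ! 0" using i by (cases L) auto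
  show ?thesis
  proof (cases "hd L = L ! i")
    case True
    then have "i = 0" using hd assms(1) i by (metis Suc_lessD nth_eq_iff_index_eq zero_less_Suc order.strict_trans)
    then show ?thesis using i True hd assms(1) by (auto simp: doubleton_eq_iff nth_eq_iff_index_eq)
  next
    case False
    then have "hd L = L ! Suc i" using i by (auto simp: doubleton_eq_iff)
    then have "Suc i = 0" using hd assms(1) i by (metis Suc_lessD nth_eq_iff_index_eq zero_less_Suc order.strict_trans)
    then show ?thesis by simp
  qed
qed

lemma path_edges_last:
  assumes "distinct L" "{last L, w} \<in> path_edges L" 
  shows "w = L ! (length L - 2)"
proof -
  have "L \<noteq> []" using assms by (auto simp: path_edges_def)
  have "w = rev L ! 1" using path_edges_hd[of "rev L" w] assms \<open>L \<noteq> []\<close>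
    by (simp add: path_edges_rev hd_rev)
  moreover have "length L \<ge> 2" using assms by (auto simp: path_edges_def)
  ultimately show ?thesis by (simp add: rev_nth numeral_2_eq_2 Suc_diff_Suc)
qed

lemma path_edges_take_drop:
  assumes "j < length M"
  shows "path_edges (take (Suc j) M) \<union> path_edges (drop j M) = path_edges M"
proof (rule set_eqI, rule iffI)
  fix x assume "x \<in> path_edges (take (Suc j) M) \<union> path_edges (drop j M)"
  then show "x \<in> path_edges M"
  proof
    assume "x \<in> path_edges (take (Suc j) M)"
    then obtain i where "x = {take (Suc j) M ! i, take (Suc j) M ! Suc i}" "Suc i < length (take (Suc j) M)"
      by (auto simp: path_edges_def)
    then have "x = {M ! i, M ! Suc i} \<and> Suc i < length M" by simp
    then show ?thesis unfolding path_edges_def by blast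
  next
    assume "x \<in> path_edges (drop j M)"
    then obtain i where "x = {drop j M ! i, drop j M ! Suc i}" "Suc i < length (drop j M)"
      by (auto simp: path_edges_def)
    then have "x = {M ! (j+i), M ! Suc (j+i)} \<and> Suc (j+i) < length M" by (auto simp: add.commute)
    then show ?thesis unfolding path_edges_def by blast
  qed
next
  fix x assume "x \<in> path_edges M"
  then obtain i where i: "x = {M ! i, M ! Suc i}" "Suc i < length M" by (auto simp: path_edges_def)
  show "x \<in> path_edges (take (Suc j) M) \<union> path_edges (drop j M)"
  proof (cases "i < j")
    case True
    then have "x = {take (Suc j) M ! i, take (Suc j) M ! Suc i}" "Suc i < length (take (Suc j) M)" using i assms by auto
    then have "x \<in> path_edges (take (Suc j) M)" unfolding path_edges_def by blast
    then show ?thesis by blast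
  next
    case False
    then have "x = {drop j M ! (i - j), drop j M ! Suc (i - j)}" "Suc (i-j) < length (drop j M)" using i assms
      by (auto simp: Suc_diff_le)
    then have "x \<in> path_edges (drop j M)" unfolding path_edges_def by blast
    then show ?thesis by blast
  qed
qed

lemma cyc_edges_path_edges:
  assumes "cs \<noteq> []"
  shows "cyc_edges cs = path_edges (cs @ [hd cs])"
proof (rule set_eqI, rule iffI)
  fix x assume "x \<in> cyc_edges cs"
  then obtain i where i: "x = {cs ! i, cs ! ((i+1) mod length cs)}" "i < length cs" by (auto simp: cyc_edges_def)
  have "(cs @ [hd cs]) ! i = cs ! i" using i by (simp add: nth_append)
  moreover have "(cs @ [hd cs]) ! Suc i = cs ! ((i+1) mod length cs)"
  proof (cases "Suc i < length cs")
    case True then show ?thesis by (simp add: nth_append)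
  next
    case False then have "Suc i = length cs" using i by auto
    then show ?thesis using assms by (simp add: nth_append hd_conv_nth)
  qed
  ultimately have "x = {(cs @ [hd cs]) ! i, (cs @ [hd cs]) ! Suc i} \<and> Suc i < length (cs @ [hd cs])" using i by auto
  then show "x \<in> path_edges (cs @ [hd cs])" unfolding path_edges_def by blast
next
  fix x assume "x \<in> path_edges (cs @ [hd cs])"
  then obtain i where i: "x = {(cs @ [hd cs]) ! i, (cs @ [hd cs]) ! Suc i}" "i < length cs"
    by (auto simp: path_edges_def)
  have "(cs @ [hd cs]) ! i = cs ! i" using i by (simp add: nth_append)
  moreover have "(cs @ [hd cs]) ! Suc i = cs ! ((i+1) mod length cs)"
  proof (cases "Suc i < length cs")
    case True then show ?thesis by (simp add: nth_append)
  next
    case False then have "Suc i = length cs" using i by auto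
    then show ?thesis using assms by (simp add: nth_append hd_conv_nth)
  qed
  ultimately show "x \<in> cyc_edges cs" using i unfolding cyc_edges_def by auto
qed

lemma path_edges_snoc: "L \<noteq> [] \<Longrightarrow> path_edges (L @ [v]) = insert {last L, v} (path_edges L)"
proof (induction L rule: induct_list012)
  case (3 x y zs)
  then show ?case by (simp add: path_edges_Cons2 insert_commute)
qed (auto simp: path_edges_Cons2 path_edges_single)

lemma cyc_edges_rotate1: "cyc_edges (rotate1 cs) = cyc_edges cs"
proof (cases cs)
  case Nil then show ?thesis by simp
next
  case (Cons x xs)
  show ?thesis
  proof (cases xs)
    case Nil then show ?thesis using Cons by simp
  next
    case Cons2: (Cons y ys)
    have "cyc_edges (rotate1 cs) = path_edges ((y#ys@[x]) @ [y])"
      using Cons Cons2 by (simp add: cyc_edges_path_edges)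
    also have "\<dots> = insert {x,y} (path_edges (y#ys@[x]))"
      by (subst path_edges_snoc) (auto simp: insert_commute)
    also have "\<dots> = path_edges (x#y#ys@[x])" by (simp add: path_edges_Cons2)
    also have "\<dots> = cyc_edges cs" using Cons Cons2 by (simp add: cyc_edges_path_edges)
    finally show ?thesis .
  qed
qed

lemma cyc_edges_rotate: "cyc_edges (rotate n cs) = cyc_edges cs"
  by (induction n) (simp_all add: cyc_edges_rotate1)

definition orient :: "(real \<Rightarrow> complex) \<Rightarrow> complex \<Rightarrow> real \<Rightarrow> complex" where
  "orient g u = (if pathstart g = u then g else reversepath g)"

fun pp :: "(complex set \<Rightarrow> real \<Rightarrow> complex) \<Rightarrow> complex list \<Rightarrow> real \<Rightarrow> complex" where
  "pp emb (u#v#w#r) = orient (emb {u,v}) u +++ pp emb (v#w#r)"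
| "pp emb [u,v] = orient (emb {u,v}) u"
| "pp emb _ = linepath 0 0"

definition img :: "(complex set \<Rightarrow> real \<Rightarrow> complex) \<Rightarrow> complex list \<Rightarrow> complex set" where
  "img emb L = (\<Union>e\<in>path_edges L. path_image (emb e))"

lemma pg_edge:
  assumes "plane_graph V E emb" "e \<in> E"
  shows "arc (emb e)" "{pathstart (emb e), pathfinish (emb e)} = e" "path_image (emb e) \<inter> V = e" "e \<subseteq> V"
proof -
  have A: "\<forall>e\<in>E. arc (emb e) \<and> {pathstart (emb e), pathfinish (emb e)} = e
               \<and> path_image (emb e) \<inter> V = e" using assms(1) unfolding plane_graph_def by (elim conjE) assumption
  then show "arc (emb e)" "{pathstart (emb e), pathfinish (emb e)} = e" "path_image (emb e) \<inter> V = e"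
    using assms(2) by auto
  then show "e \<subseteq> V" by blast
qed

lemma pg_two:
  assumes "plane_graph V E emb" "e \<in> E" "e' \<in> E" "e \<noteq> e'"
  shows "path_image (emb e) \<inter> path_image (emb e') \<subseteq> e \<inter> e'"
proof -
  have "\<forall>e\<in>E. \<forall>e'\<in>E. e \<noteq> e' \<longrightarrow> path_image (emb e) \<inter> path_image (emb e') \<subseteq> e \<inter> e'"
    using assms(1) unfolding plane_graph_def by (elim conjE) assumption
  then show ?thesis using assms(2-4) by blast
qed

lemma pg_finite:
  assumes "plane_graph V E emb" shows "finite V" "finite E"
proof -
  show fV: "finite V" using assms unfolding plane_graph_def by blast
  have "\<forall>e\<in>E. \<exists>u v. e = {u, v} \<and> u \<noteq> v \<and> u \<in> V \<and> v \<in> V"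
    using assms(1) unfolding plane_graph_def by (elim conjE) assumption
  then have "E \<subseteq> Pow V" by fastforce
  then show "finite E" using fV finite_subset by blast
qed

lemma pg_unique:
  assumes "plane_graph V E emb" "e \<in> E" "e' \<in> E" "x \<in> path_image (emb e)" "x \<in> path_image (emb e')" "x \<notin> V"
  shows "e = e'"
proof (rule ccontr)
  assume "e \<noteq> e'"
  then have "x \<in> e \<inter> e'" using pg_two[OF assms(1-3)] assms(4,5) by blast
  moreover have "e \<subseteq> V" using pg_edge[OF assms(1) assms(2)] by blast
  ultimately show False using assms(6) by blast
qed

lemma pg_mid:
  assumes "plane_graph V E emb" "e \<in> E"
  obtains x where "x \<in> path_image (emb e)" "x \<notin> V"
proof -
  let ?g = "emb e"
  have arc: "arc ?g" using pg_edge[OF assms] by blast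
  have im: "?g (1/2) \<in> path_image ?g" by (auto simp: path_image_def)
  have inj: "inj_on ?g {0..1}" using arc by (simp add: arc_def)
  have n0: "?g (1/2) \<noteq> ?g 0" using inj_onD[OF inj, of "1/2" 0] by auto
  have n1: "?g (1/2) \<noteq> ?g 1" using inj_onD[OF inj, of "1/2" 1] by auto
  have pv: "path_image ?g \<inter> V = {pathstart ?g, pathfinish ?g}" using pg_edge[OF assms] by simp
  have "?g (1/2) \<notin> V"
  proof
    assume "?g (1/2) \<in> V"
    then have "?g (1/2) \<in> {pathstart ?g, pathfinish ?g}" using im pv by blast
    then show False using n0 n1 by (simp add: pathstart_def pathfinish_def)
  qed
  then show ?thesis using that \<open>?g (1/2) \<in> path_image ?g\<close> by blast
qed

lemma orient_props:
  assumes "plane_graph V E emb" "{u,v} \<in> E" "u \<noteq> v"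
  shows "arc (orient (emb {u,v}) u) \<and> pathstart (orient (emb {u,v}) u) = u \<and> pathfinish (orient (emb {u,v}) u) = v
     \<and> path_image (orient (emb {u,v}) u) = path_image (emb {u,v})"
proof -
  let ?g = "emb {u,v}"
  have a: "arc ?g" and se: "{pathstart ?g, pathfinish ?g} = {u,v}" using pg_edge[OF assms(1,2)] by blast+
  show ?thesis
  proof (cases "pathstart ?g = u")
    case True
    then have "pathfinish ?g = v" using se assms(3) by (auto simp: doubleton_eq_iff)
    then show ?thesis using True a by (simp add: orient_def)
  next
    case False
    then have "pathstart ?g = v" "pathfinish ?g = u" using se by (auto simp: doubleton_eq_iff)
    then show ?thesis using False a by (simp add: orient_def arc_reversepath)
  qed
qed

lemma img_Cons2: "img emb (u#v#r) = path_image (emb {u,v}) \<union> img emb (v#r)"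
  by (simp add: img_def path_edges_Cons2)

lemma pp_props:
  assumes "plane_graph V E emb"
  shows "distinct L \<Longrightarrow> 2 \<le> length L \<Longrightarrow> path_edges L \<subseteq> E \<Longrightarrow>
    arc (pp emb L) \<and> pathstart (pp emb L) = hd L \<and> pathfinish (pp emb L) = last L
     \<and> path_image (pp emb L) = img emb L"
proof (induction L rule: induct_list012)
  case (3 u v r)
  have uv: "{u,v} \<in> E" "u \<noteq> v" using "3.prems" by (auto simp: path_edges_Cons2)
  note o = orient_props[OF assms uv]
  show ?case
  proof (cases r)
    case Nil
    then show ?thesis using o by (simp add: img_def path_edges_Cons2 path_edges_single)
  next
    case (Cons w r')
    have IH: "arc (pp emb (v#r)) \<and> pathstart (pp emb (v#r)) = v \<and> pathfinish (pp emb (v#r)) = last (v#r)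
       \<and> path_image (pp emb (v#r)) = img emb (v#r)"
      using "3.IH"(2) "3.prems" Cons by (auto simp: path_edges_Cons2)
    have int: "path_image (emb {u,v}) \<inter> img emb (v#r) \<subseteq> {v}"
    proof
      fix y assume y: "y \<in> path_image (emb {u,v}) \<inter> img emb (v#r)"
      then obtain e' where e': "e' \<in> path_edges (v#r)" "y \<in> path_image (emb e')" by (auto simp: img_def)
      have "u \<notin> e'" using path_edges_sub_set[OF e'(1)] "3.prems"(1) by auto
      then have "e' \<noteq> {u,v}" by auto
      moreover have "e' \<in> E" using e' "3.prems" by (auto simp: path_edges_Cons2)
      ultimately have "y \<in> {u,v} \<inter> e'" using pg_two[OF assms uv(1), of e'] y e' by blast
      then show "y \<in> {v}" using \<open>u \<notin> e'\<close> by blast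
    qed
    have eq: "pp emb (u#v#r) = orient (emb {u,v}) u +++ pp emb (v#r)" using Cons by simp
    show ?thesis unfolding eq
      using o IH int arc_join[of "orient (emb {u,v}) u" "pp emb (v#r)"]
      by (simp add: path_image_join img_Cons2 Cons)
  qed
qed auto

lemma clopen_sub:
  fixes S T :: "'a::topological_space set"
  assumes "connected S" "open T" "S \<inter> T \<noteq> {}" "S \<inter> frontier T = {}"
  shows "S \<subseteq> T"
  using connected_Int_frontier[OF assms(1) assms(3)] assms(4) by blast

lemma drawing_mono: "W \<subseteq> W' \<Longrightarrow> F \<subseteq> F' \<Longrightarrow> drawing emb W F \<subseteq> drawing emb W' F'"
  unfolding drawing_def by blast

lemma drawing_closed:
  assumes "plane_graph V E emb" "W \<subseteq> V" "F \<subseteq> E"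
  shows "closed (drawing emb W F)"
proof -
  have "finite W" using pg_finite(1)[OF assms(1)] assms(2) finite_subset by blast
  moreover have "finite F" using pg_finite(2)[OF assms(1)] assms(3) finite_subset by blast
  moreover have "\<And>e. e \<in> F \<Longrightarrow> closed (path_image (emb e))"
    using pg_edge(1)[OF assms(1)] assms(3) by (meson arc_imp_path compact_imp_closed compact_path_image subsetD)
  ultimately show ?thesis unfolding drawing_def
    by (intro closed_Un finite_imp_closed closed_Union) auto
qed

lemma img_sub_drawing: "path_edges L \<subseteq> F \<Longrightarrow> img emb L \<subseteq> drawing emb W F"
  unfolding img_def drawing_def by blast

lemma edge_sub_image:
  assumes "plane_graph V E emb" "e \<in> E" shows "e \<subseteq> path_image (emb e)"
proof -
  have h: "e = {pathstart (emb e), pathfinish (emb e)}" using pg_edge(2)[OF assms] by simp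
  show ?thesis by (subst (1) h) (simp add: pathstart_in_path_image pathfinish_in_path_image)
qed

lemma set_sub_img:
  assumes "plane_graph V E emb" "2 \<le> length L" "path_edges L \<subseteq> E"
  shows "set L \<subseteq> img emb L"
proof
  fix x assume "x \<in> set L"
  then obtain e where e: "e \<in> path_edges L" "x \<in> e" using set_sub_path_edges[OF assms(2)] by blast
  then show "x \<in> img emb L" using edge_sub_image[OF assms(1), of e] assms(3) unfolding img_def by blast
qed

lemma img_V:
  assumes "plane_graph V E emb" "path_edges L \<subseteq> E"
  shows "img emb L \<inter> V \<subseteq> set L"
proof
  fix x assume "x \<in> img emb L \<inter> V"
  then obtain e where e: "e \<in> path_edges L" "x \<in> path_image (emb e)" "x \<in> V" unfolding img_def by blast
  then have "x \<in> e" using pg_edge(3)[OF assms(1), of e] assms(2) by blast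
  then show "x \<in> set L" using path_edges_sub_set[OF e(1)] by blast
qed

lemma img_edge:
  assumes "plane_graph V E emb" "path_edges L \<subseteq> E" "x \<in> img emb L" "x \<in> path_image (emb e)" "e \<in> E" "x \<notin> V"
  shows "e \<in> path_edges L"
proof -
  obtain e' where e': "e' \<in> path_edges L" "x \<in> path_image (emb e')" using assms(3) unfolding img_def by blast
  have "e' = e" using pg_unique[OF assms(1), of e' e x] e' assms by blast
  then show ?thesis using e' by simp
qed

lemma img_inter:
  assumes "plane_graph V E emb" "path_edges L \<subseteq> E" "path_edges L' \<subseteq> E"
  shows "img emb L \<inter> img emb L' \<subseteq> (set L \<inter> set L') \<union> (\<Union>e\<in>path_edges L \<inter> path_edges L'. path_image (emb e))"
proof
  fix x assume x: "x \<in> img emb L \<inter> img emb L'"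
  show "x \<in> (set L \<inter> set L') \<union> (\<Union>e\<in>path_edges L \<inter> path_edges L'. path_image (emb e))"
  proof (cases "x \<in> V")
    case True
    then show ?thesis using img_V[OF assms(1) assms(2)] img_V[OF assms(1) assms(3)] x by blast
  next
    case False
    obtain e where e: "e \<in> path_edges L" "x \<in> path_image (emb e)" using x unfolding img_def by blast
    have "e \<in> path_edges L'" using img_edge[OF assms(1) assms(3), of x e] e x False assms(2) by blast
    then show ?thesis using e by blast
  qed
qed

lemma pg_pair:
  assumes "plane_graph V E emb" "e \<in> E"
  obtains u v where "e = {u,v}" "u \<noteq> v"
proof -
  have "\<forall>e\<in>E. \<exists>u v. e = {u, v} \<and> u \<noteq> v \<and> u \<in> V \<and> v \<in> V"
    using assms(1) unfolding plane_graph_def by (elim conjE) assumption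
  then show ?thesis using assms(2) that by blast
qed

lemma frontier_subset_closure: "frontier S \<subseteq> closure S"
  by (auto simp: frontier_def)

lemma ft_adj_sym: "ft_adj V E emb f g \<Longrightarrow> ft_adj V E emb g f"
  unfolding ft_adj_def by blast

lemma core:
  fixes V :: "complex set" and E :: "complex set set" and emb :: "complex set \<Rightarrow> real \<Rightarrow> complex"
    and VB :: "complex set" and EB :: "complex set set" and Out :: "complex set"
    and cs :: "complex list" and ps :: "complex list"
  assumes pg: "plane_graph V E emb"
    and EBE: "EB \<subseteq> E" and VBV: "VB \<subseteq> V" and VBd: "VB = \<Union>EB"
    and EBdef: "EB = \<Union>{tri_edges E emb f' | f'. \<exists>f. facial_triangle V E emb f \<and> e0 \<in> tri_edges E emb f
                                          \<and> (ft_adj V E emb)\<^sup>*\<^sup>* f f'}"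
    and OutF: "Out \<in> faces emb VB EB" and unb: "\<not> bounded Out" and notG: "Out \<notin> faces emb V E"
    and csd: "distinct cs" and csl: "3 \<le> length cs" and cse: "cyc_edges cs \<subseteq> EB" and csa: "cs ! 0 = a"
    and csV: "set cs \<subseteq> V"
    and fr: "drawing emb (set cs) (cyc_edges cs) = frontier Out"
    and psd: "distinct ps" and psl: "2 \<le> length ps" and pse: "path_edges ps \<subseteq> EB"
    and psa: "hd ps = a" and psb: "last ps = b" and bcs: "b \<in> set cs"
    and pscs: "set ps \<inter> set cs \<subseteq> {a,b}" and psdisj: "path_edges ps \<inter> cyc_edges cs = {}"
  shows "\<exists>e\<in>path_edges ps. \<exists>f1 f2. f1 \<noteq> f2 \<and> facial_triangle V E emb f1 \<and> facial_triangle V E emb f2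
            \<and> e \<in> tri_edges E emb f1 \<and> e \<in> tri_edges E emb f2"
proof (rule ccontr)
  assume nc: "\<not> ?thesis"
  define n where "n = length cs"
  define R where "R = ft_adj V E emb"
  define Cls where "Cls g \<longleftrightarrow> (\<exists>f. facial_triangle V E emb f \<and> e0 \<in> tri_edges E emb f \<and> R\<^sup>*\<^sup>* f g)" for g
  have ab: "a \<noteq> b"
  proof
    assume "a = b"
    then have "hd ps = last ps" using psa psb by simp
    moreover have "ps = hd ps # tl ps" "tl ps \<noteq> []" using psl by (cases ps; auto)+
    ultimately show False using psd by (metis distinct.simps(2) last_in_set last_tl)
  qed
  obtain j where j: "j < n" "cs ! j = b" using bcs by (auto simp: in_set_conv_nth n_def)
  have j0: "j \<noteq> 0"
  proof
    assume "j = 0" then show False using j csa ab by simp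
  qed
  define L1 where "L1 = take (Suc j) cs"
  define L2 where "L2 = drop j cs @ [a]"
  have csne: "cs \<noteq> []" using csl by auto
  have hdcs: "hd cs = a" using csa csne by (simp add: hd_conv_nth)
  have PE: "path_edges L1 \<union> path_edges L2 = cyc_edges cs"
  proof -
    have "path_edges (take (Suc j) (cs @ [a])) \<union> path_edges (drop j (cs @ [a])) = path_edges (cs @ [a])"
      using j by (intro path_edges_take_drop) (simp add: n_def)
    moreover have "take (Suc j) (cs @ [a]) = L1" "drop j (cs @ [a]) = L2" using j by (simp_all add: L1_def L2_def n_def)
    ultimately show ?thesis using cyc_edges_path_edges[OF csne] hdcs by simp
  qed
  have E1: "path_edges L1 \<subseteq> E" "path_edges L2 \<subseteq> E" "path_edges ps \<subseteq> E" "cyc_edges cs \<subseteq> E"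
    using PE cse EBE pse by blast+
  have L1d: "distinct L1" "2 \<le> length L1" "hd L1 = a" "last L1 = b"
  proof -
    show "distinct L1" using csd by (simp add: L1_def)
    show "2 \<le> length L1" "hd L1 = a" using j j0 hdcs csne by (auto simp: L1_def n_def)
    show "last L1 = b" using j by (simp add: L1_def n_def take_Suc_conv_app_nth)
  qed
  have anot: "a \<notin> set (drop j cs)"
  proof
    assume "a \<in> set (drop j cs)"
    then obtain k where k: "k < length (drop j cs)" "drop j cs ! k = a" by (auto simp: in_set_conv_nth)
    then have "cs ! (j + k) = cs ! 0" using csa j by (simp add: n_def)
    moreover have "j + k < length cs" using k by simp
    ultimately have "j + k = 0" using nth_eq_iff_index_eq[OF csd, of "j+k" 0] csne by simp
    then show False using j0 by simp
  qed
  have L2d: "distinct (rev L2)" "2 \<le> length (rev L2)" "hd (rev L2) = a" "last (rev L2) = b"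
    using csd j anot by (auto simp: L2_def n_def hd_drop_conv_nth last_rev)
  have E2: "path_edges (rev L2) \<subseteq> E" using E1 by (simp add: path_edges_rev)
  define c1 where "c1 = pp emb L1"
  define c2 where "c2 = pp emb (rev L2)"
  define c where "c = pp emb ps"
  have psh: "distinct ps" "2 \<le> length ps" "hd ps = a" "last ps = b" using psd psl psa psb by auto
  note P1 = pp_props[OF pg L1d(1,2) E1(1)] and P2 = pp_props[OF pg L2d(1,2) E2] and P3 = pp_props[OF pg psh(1,2) E1(3)]
  define I1 where "I1 = img emb L1"
  define I2 where "I2 = img emb L2"
  define IP where "IP = img emb ps"
  have im: "path_image c1 = I1" "path_image c2 = I2" "path_image c = IP"
    using P1 P2 P3 by (simp_all add: c1_def c2_def c_def I1_def I2_def IP_def img_def path_edges_rev)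
  have se: "pathstart c1 = a" "pathfinish c1 = b" "pathstart c2 = a" "pathfinish c2 = b" "pathstart c = a" "pathfinish c = b"
    using P1 P2 P3 L1d L2d psh by (simp_all add: c1_def c2_def c_def)
  have sp: "simple_path c1" "simple_path c2" "simple_path c"
    using P1 P2 P3 by (simp_all add: c1_def c2_def c_def arc_imp_simple_path)
  have pth: "path c1" "path c2" "path c" using sp by (simp_all add: simple_path_imp_path)
  have tdj: "set (take j cs) \<inter> set (drop j cs) = {}" using set_take_disj_set_drop_if_distinct[OF csd] by simp
  have sL1: "set L1 = set (take j cs) \<union> {b}" using j by (simp add: L1_def n_def take_Suc_conv_app_nth)
  have sL2: "set L2 = set (drop j cs) \<union> {a}" by (simp add: L2_def)
  have bdrop: "b \<in> set (drop j cs)"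
  proof -
    have "drop j cs \<noteq> []" using j by (simp add: n_def)
    then show ?thesis using j hd_drop_conv_nth[of j cs] by (metis hd_in_set n_def)
  qed
  have aL1: "a \<in> set L1" using L1d by (metis hd_in_set list.size(3) not_numeral_le_zero)
  have L12: "set L1 \<inter> set L2 = {a,b}" using tdj sL1 sL2 bdrop aL1 by blast
  have sLcs: "set L1 \<subseteq> set cs" "set L2 \<subseteq> set cs"
    using hdcs csne by (auto simp: L1_def L2_def dest: in_set_takeD in_set_dropD)
  have absets: "a \<in> set L1" "b \<in> set L1" "a \<in> set L2" "b \<in> set L2" "a \<in> set ps" "b \<in> set ps"
    using aL1 L12 psh by (auto) (metis hd_in_set list.size(3) not_numeral_le_zero, metis last_in_set list.size(3) not_numeral_le_zero)
  have L1l: "2 \<le> length L1" and L2l: "2 \<le> length L2" using L1d L2d by simp_all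
  have subI: "set L1 \<subseteq> I1" "set L2 \<subseteq> I2" "set ps \<subseteq> IP"
    using set_sub_img[OF pg L1l E1(1)] set_sub_img[OF pg L2l E1(2)] set_sub_img[OF pg psh(2) E1(3)]
    by (simp_all add: I1_def I2_def IP_def)
  have I1P: "I1 \<inter> IP = {a,b}"
  proof
    have "path_edges L1 \<inter> path_edges ps = {}" using PE psdisj by blast
    then have "I1 \<inter> IP \<subseteq> set L1 \<inter> set ps"
      using img_inter[OF pg E1(1) E1(3)] by (simp add: I1_def IP_def)
    then show "I1 \<inter> IP \<subseteq> {a,b}" using sLcs pscs by blast
    show "{a,b} \<subseteq> I1 \<inter> IP" using absets subI by blast
  qed
  have I2P: "I2 \<inter> IP = {a,b}"
  proof
    have "path_edges L2 \<inter> path_edges ps = {}" using PE psdisj by blast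
    then have "I2 \<inter> IP \<subseteq> set L2 \<inter> set ps"
      using img_inter[OF pg E1(2) E1(3)] by (simp add: I2_def IP_def)
    then show "I2 \<inter> IP \<subseteq> {a,b}" using sLcs pscs by blast
    show "{a,b} \<subseteq> I2 \<inter> IP" using absets subI by blast
  qed
  have L2nth: "L2 ! k = cs ! (j + k)" if "k < n - j" for k
    using that j by (simp add: L2_def nth_append n_def)
  have lenL2: "length L2 = n - j + 1" using j by (simp add: L2_def n_def)
  have lastL2: "last L2 = a" by (simp add: L2_def)
  have L2dist: "distinct L2" using L2d by simp
  have csinj: "p < n \<Longrightarrow> q < n \<Longrightarrow> cs ! p = cs ! q \<Longrightarrow> p = q" for p q
    using nth_eq_iff_index_eq[OF csd] by (simp add: n_def)
  have noab: "{a,b} \<notin> path_edges L1 \<inter> path_edges L2"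
  proof
    assume h: "{a,b} \<in> path_edges L1 \<inter> path_edges L2"
    then have "b = L1 ! 1" using path_edges_hd[OF L1d(1), of b] L1d by simp
    then have "cs ! j = cs ! 1" using j L1d(2) by (simp add: L1_def)
    then have j1: "j = 1" using csinj[of j 1] j csl n_def by simp
    have "{last L2, b} \<in> path_edges L2" using h lastL2 by simp
    then have "b = L2 ! (length L2 - 2)" using path_edges_last[OF L2dist] by blast
    also have "\<dots> = cs ! (n - 1)" using lenL2 L2nth[of "n - j - 1"] j j0 by simp
    finally have "cs ! j = cs ! (n - 1)" using j by simp
    then have "j = n - 1" using csinj[of j "n-1"] j csl n_def by simp
    then show False using j1 csl n_def by simp
  qed
  have I12: "I1 \<inter> I2 = {a,b}"
  proof
    have "\<And>e. e \<in> path_edges L1 \<inter> path_edges L2 \<Longrightarrow> False"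
    proof -
      fix e assume e: "e \<in> path_edges L1 \<inter> path_edges L2"
      have "e \<subseteq> {a,b}" using path_edges_sub_set[of e L1] path_edges_sub_set[of e L2] e L12 by blast
      moreover obtain u v where "e = {u,v}" "u \<noteq> v" using pg_pair[OF pg, of e] e E1 by blast
      ultimately have "e = {a,b}" by blast
      then show False using noab e by simp
    qed
    then have "path_edges L1 \<inter> path_edges L2 = {}" by blast
    then have "I1 \<inter> I2 \<subseteq> set L1 \<inter> set L2"
      using img_inter[OF pg E1(1) E1(2)] by (simp add: I1_def I2_def)
    then show "I1 \<inter> I2 \<subseteq> {a,b}" using L12 by blast
    show "{a,b} \<subseteq> I1 \<inter> I2" using absets subI by blast
  qed
  define K where "K = I1 \<union> I2"

  have Kd: "K \<subseteq> drawing emb V E" "IP \<subseteq> drawing emb V E"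
    using img_sub_drawing[OF E1(1)] img_sub_drawing[OF E1(2)] img_sub_drawing[OF E1(3)]
    by (auto simp: K_def I1_def I2_def IP_def)
  have IPB: "IP \<subseteq> drawing emb VB EB" using img_sub_drawing[OF pse] by (simp add: IP_def)
  have dBG: "drawing emb VB EB \<subseteq> drawing emb V E" using drawing_mono[OF VBV EBE] .
  have clB: "closed (drawing emb VB EB)" using drawing_closed[OF pg VBV EBE] .
  have clG: "closed (drawing emb V E)" using drawing_closed[OF pg order_refl order_refl] .
  have OutC: "Out \<in> components (- drawing emb VB EB)" using OutF by (simp add: faces_def)
  have Outo: "open Out" using open_components[OF _ OutC] clB by (simp add: open_Compl)
  have Outc: "connected Out" using in_components_connected[OF OutC] .
  have OutB: "Out \<inter> drawing emb VB EB = {}" using in_components_subset[OF OutC] by blast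
  have cpt: "compact I1" "compact I2" "compact IP" using compact_path_image[OF pth(1)] compact_path_image[OF pth(2)]
      compact_path_image[OF pth(3)] im by simp_all
  have Kb: "bounded K" "closed K" using cpt by (simp_all add: K_def compact_imp_bounded compact_imp_closed bounded_Un closed_Un)
  have frK: "frontier Out \<subseteq> K"
  proof -
    have "set cs = set (take j cs) \<union> set (drop j cs)" by (metis append_take_drop_id set_append)
    then have "set cs \<subseteq> set L1 \<union> set L2" using sL1 sL2 by blast
    then have "set cs \<subseteq> K" using subI by (auto simp: K_def)
    moreover have "path_image (emb e) \<subseteq> K" if "e \<in> cyc_edges cs" for e
      using that PE by (auto simp: K_def I1_def I2_def img_def)
    ultimately show ?thesis using fr[symmetric] by (auto simp: drawing_def)
  qed
  have outK: "outside K \<subseteq> Out"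
  proof (rule clopen_sub)
    show "connected (outside K)" using connected_outside[OF Kb(1)] by simp
    show "open Out" by (rule Outo)
    show "outside K \<inter> frontier Out = {}" using frK outside_no_overlap[of K] by blast
    show "outside K \<inter> Out \<noteq> {}"
    proof
      assume "outside K \<inter> Out = {}"
      then have "Out \<subseteq> inside K \<union> K" using inside_Un_outside[of K] by blast
      moreover have "bounded (inside K \<union> K)" using bounded_inside[OF Kb(1)] Kb(1) by (simp add: bounded_Un)
      ultimately show False using unb bounded_subset by blast
    qed
  qed
  have ne12: "IP \<inter> inside K \<noteq> {}"
  proof -
    have ep: "{ps ! 0, ps ! Suc 0} \<in> path_edges ps" using psl unfolding path_edges_def by force
    then have epE: "{ps ! 0, ps ! Suc 0} \<in> E" using E1 by blast
    obtain x where x: "x \<in> path_image (emb {ps ! 0, ps ! Suc 0})" "x \<notin> V" using pg_mid[OF pg epE] by blast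
    have xIP: "x \<in> IP" using x ep by (auto simp: IP_def img_def)
    have "x \<notin> I1"
    proof
      assume "x \<in> I1"
      then have "{ps ! 0, ps ! Suc 0} \<in> path_edges L1" using img_edge[OF pg E1(1), of x] x epE by (simp add: I1_def)
      then show False using PE psdisj ep by blast
    qed
    moreover have "x \<notin> I2"
    proof
      assume "x \<in> I2"
      then have "{ps ! 0, ps ! Suc 0} \<in> path_edges L2" using img_edge[OF pg E1(2), of x] x epE by (simp add: I2_def)
      then show False using PE psdisj ep by blast
    qed
    moreover have "x \<notin> outside K" using outK OutB IPB xIP by blast
    ultimately have "x \<in> - K" "x \<notin> outside K" by (auto simp: K_def)
    then have "x \<in> inside K" using inside_Un_outside[of K] by blast
    then show ?thesis using xIP by blast
  qed
  define ins1 where "ins1 = inside (I1 \<union> IP)"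
  define ins2 where "ins2 = inside (I2 \<union> IP)"
  have spl: "ins1 \<inter> ins2 = {} \<and> ins1 \<union> ins2 \<union> (IP - {a,b}) = inside K"
    using split_inside_simple_closed_curve[OF sp(1) se(1,2) sp(2) se(3,4) sp(3) se(5,6) ab]
    unfolding im ins1_def ins2_def K_def using I12 I1P I2P ne12[unfolded K_def] by blast
  have K1c: "closed (I1 \<union> IP)" "closed (I2 \<union> IP)" using cpt by (simp_all add: compact_imp_closed closed_Un)
  have ins_open: "open ins1" "open ins2" using open_inside K1c by (simp_all add: ins1_def ins2_def)
  have cl1: "closure ins1 \<subseteq> (I1 \<union> IP) \<union> ins1" using closure_inside_subset[OF K1c(1)] by (simp add: ins1_def)
  have cl2: "closure ins2 \<subseteq> (I2 \<union> IP) \<union> ins2" using closure_inside_subset[OF K1c(2)] by (simp add: ins2_def)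
  have fr1: "frontier ins1 \<subseteq> I1 \<union> IP" using frontier_inside_subset[OF K1c(1)] by (simp add: ins1_def)
  have fr2: "frontier ins2 \<subseteq> I2 \<union> IP" using frontier_inside_subset[OF K1c(2)] by (simp add: ins2_def)
  have insK: "ins1 \<subseteq> inside K" "ins2 \<subseteq> inside K" using spl by blast+
  have no1: "ins1 \<inter> (I1 \<union> IP) = {}" "ins2 \<inter> (I2 \<union> IP) = {}"
    using inside_no_overlap by (simp_all add: ins1_def ins2_def)
  have iKK: "inside K \<inter> K = {}" by simp
  have sep1: "ins1 \<inter> ((I2 \<union> IP) \<union> ins2) = {}" using no1 insK iKK spl unfolding K_def by blast
  have sep2: "ins2 \<inter> ((I1 \<union> IP) \<union> ins1) = {}" using no1 insK iKK spl unfolding K_def by blast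
  have abV: "a \<in> V" "b \<in> V" using csV hdcs csne bcs by auto
  have ClsR: "Cls h" if "Cls g" "R\<^sup>*\<^sup>* g h" for g h
    using that unfolding Cls_def by (meson rtranclp_trans)
  have ClsEB: "tri_edges E emb g \<subseteq> EB" if "Cls g" for g
    using that unfolding EBdef Cls_def R_def by blast
  have ClsFT: "facial_triangle V E emb g" if Cg: "Cls g" for g
  proof -
    obtain f where f: "facial_triangle V E emb f" "R\<^sup>*\<^sup>* f g" using Cg unfolding Cls_def by blast
    show ?thesis
    proof (cases "f = g")
      case True then show ?thesis using f by simp
    next
      case False
      then obtain y where "R y g" using f(2) by (metis rtranclp.cases)
      then show ?thesis unfolding R_def ft_adj_def by blast
    qed
  qed
  have EBCls: "\<exists>g. Cls g \<and> e \<in> tri_edges E emb g" if "e \<in> EB" for e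
    using that unfolding EBdef Cls_def R_def by blast
  have gprops: "g \<noteq> {} \<and> (g \<subseteq> ins1 \<or> g \<subseteq> ins2)" if Cg: "Cls g" for g
  proof -
    have ft: "facial_triangle V E emb g" using ClsFT[OF Cg] .
    have gF: "g \<in> components (- drawing emb V E)" using ft by (simp add: facial_triangle_def faces_def)
    have go: "open g" using open_components[OF _ gF] clG by (simp add: open_Compl)
    have gc: "connected g" using in_components_connected[OF gF] .
    have gne: "g \<noteq> {}" using in_components_nonempty[OF gF] .
    have gG: "g \<inter> drawing emb V E = {}" using in_components_subset[OF gF] by blast
    obtain x y z where xyz: "{x,y} \<in> E" "{y,z} \<in> E" "{x,z} \<in> E"
       "frontier g = drawing emb {x,y,z} {{x,y},{y,z},{x,z}}"
      using ft unfolding facial_triangle_def by blast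
    have "{{x,y},{y,z},{x,z}} \<subseteq> tri_edges E emb g"
      using xyz unfolding tri_edges_def drawing_def by auto
    then have ed: "{{x,y},{y,z},{x,z}} \<subseteq> EB" using ClsEB[OF Cg] by blast
    then have "{x,y,z} \<subseteq> VB" using VBd by blast
    then have frg: "frontier g \<subseteq> drawing emb VB EB" using xyz(4) drawing_mono[OF _ ed] by metis
    have gOut: "g \<inter> Out = {}"
    proof (rule ccontr)
      assume ne: "g \<inter> Out \<noteq> {}"
      have "Out \<subseteq> g"
        using clopen_sub[OF Outc go] ne frg OutB by blast
      moreover have "g \<subseteq> Out"
        using components_maximal[OF OutC gc] gG dBG ne by blast
      ultimately have "Out = g" by blast
      then show False using notG ft by (simp add: facial_triangle_def)
    qed
    have "g \<subseteq> inside K"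
      using gOut outK gG Kd inside_Un_outside[of K] by blast
    then have "g \<subseteq> ins1 \<union> ins2" using spl gG Kd by blast
    moreover have "g \<subseteq> ins1" if "g \<inter> ins1 \<noteq> {}"
      using clopen_sub[OF gc ins_open(1) that] fr1 gG Kd by (auto simp: K_def)
    ultimately show ?thesis using gne by blast
  qed
  have KS: False if C: "Cls g" "Cls h" "R g h" "g \<subseteq> ins1" "h \<subseteq> ins2" for g h
  proof -
    obtain e where e: "e \<in> tri_edges E emb g" "e \<in> tri_edges E emb h"
      using C(3) unfolding R_def ft_adj_def by blast
    have eE: "e \<in> E" using e by (simp add: tri_edges_def)
    obtain x where x: "x \<in> path_image (emb e)" "x \<notin> V" using pg_mid[OF pg eE] by blast
    have "x \<in> frontier g" "x \<in> frontier h" using e x by (auto simp: tri_edges_def)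
    then have "x \<in> closure ins1" "x \<in> closure ins2"
      using C(4,5) closure_mono frontier_subset_closure by blast+
    then have "x \<in> (I1 \<union> IP) \<inter> (I2 \<union> IP)" using cl1 cl2 sep1 sep2 by blast
    then have "x \<in> IP \<or> x \<in> I1 \<inter> I2" by blast
    then have "x \<in> IP" using I12 abV x by auto
    then have eP: "e \<in> path_edges ps" using img_edge[OF pg E1(3), of x e] x eE by (simp add: IP_def)
    have "g \<noteq> h" using gprops[OF C(1)] C(4,5) spl by blast
    then show False using nc eP e ClsFT C(1,2) by blast
  qed
  have inv: "Cls f \<Longrightarrow> (f \<subseteq> ins1 \<longleftrightarrow> g \<subseteq> ins1)" if "R\<^sup>*\<^sup>* f g" for f g
    using that
  proof (induction rule: rtranclp_induct)
    case base then show ?case by simp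
  next
    case (step y z)
    have Cy: "Cls y" using ClsR step by blast
    have Cz: "Cls z" using ClsR[OF Cy, of z] step by blast
    have Rzy: "R z y" using step(2) ft_adj_sym unfolding R_def by blast
    have "y \<subseteq> ins1 \<longleftrightarrow> z \<subseteq> ins1"
    proof
      assume "y \<subseteq> ins1"
      then show "z \<subseteq> ins1" using gprops[OF Cz] KS[OF Cy Cz step(2)] by blast
    next
      assume "z \<subseteq> ins1"
      then show "y \<subseteq> ins1" using gprops[OF Cy] KS[OF Cz Cy Rzy] by blast
    qed
    then show ?case using step by blast
  qed
  have n3: "3 \<le> n" using csl by (simp add: n_def)
  have L1nth: "L1 ! k = cs ! k" if "k \<le> j" for k using that j by (simp add: L1_def n_def)
  define e1 where "e1 = {a, cs ! 1}"
  define e2 where "e2 = {a, cs ! (n - 1)}"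
  have e1L1: "e1 \<in> path_edges L1"
  proof -
    have "e1 = {L1 ! 0, L1 ! Suc 0} \<and> Suc 0 < length L1" using L1nth[of 0] L1nth[of 1] j0 csa L1d(2)
      by (simp add: e1_def)
    then show ?thesis unfolding path_edges_def by blast
  qed
  have e1L2: "e1 \<notin> path_edges L2"
  proof
    assume "e1 \<in> path_edges L2"
    then have "{last L2, cs ! 1} \<in> path_edges L2" using lastL2 by (simp add: e1_def)
    then have "cs ! 1 = L2 ! (length L2 - 2)" using path_edges_last[OF L2dist] by blast
    also have "\<dots> = cs ! (n - 1)" using lenL2 L2nth[of "n - j - 1"] j j0 by simp
    finally have "1 = n - 1" using csinj[of 1 "n - 1"] n3 by simp
    then show False using n3 by simp
  qed
  have e2L2: "e2 \<in> path_edges L2"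
  proof -
    have "L2 ! (n - j - 1) = cs ! (n - 1)" using L2nth[of "n - j - 1"] j j0 by simp
    moreover have "L2 ! Suc (n - j - 1) = a"
    proof -
      have "Suc (n - j - 1) = length (drop j cs)" using j by (simp add: n_def)
      then show ?thesis by (simp add: L2_def nth_append)
    qed
    ultimately have "e2 = {L2 ! (n - j - 1), L2 ! Suc (n - j - 1)} \<and> Suc (n - j - 1) < length L2"
      using lenL2 j by (auto simp: e2_def)
    then show ?thesis unfolding path_edges_def by blast
  qed
  have e2L1: "e2 \<notin> path_edges L1"
  proof
    assume "e2 \<in> path_edges L1"
    then have "{hd L1, cs ! (n - 1)} \<in> path_edges L1" using L1d by (simp add: e2_def)
    then have "cs ! (n - 1) = L1 ! 1" using path_edges_hd[OF L1d(1)] by blast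
    then have "cs ! (n - 1) = cs ! 1" using L1nth[of 1] j0 by simp
    then have "n - 1 = 1" using csinj[of "n - 1" 1] n3 by simp
    then show False using n3 by simp
  qed
  have e1P: "e1 \<notin> path_edges ps" "e2 \<notin> path_edges ps" using e1L1 e2L2 PE psdisj by blast+
  have e12EB: "e1 \<in> EB" "e2 \<in> EB" using e1L1 e2L2 PE cse by blast+
  have e12E: "e1 \<in> E" "e2 \<in> E" using e12EB EBE by blast+
  obtain g1 where g1: "Cls g1" "e1 \<in> tri_edges E emb g1" using EBCls[OF e12EB(1)] by blast
  obtain g2 where g2: "Cls g2" "e2 \<in> tri_edges E emb g2" using EBCls[OF e12EB(2)] by blast
  have g1s: "g1 \<subseteq> ins1"
  proof -
    have "\<not> g1 \<subseteq> ins2"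
    proof
      assume g1i: "g1 \<subseteq> ins2"
      obtain x where x: "x \<in> path_image (emb e1)" "x \<notin> V" using pg_mid[OF pg e12E(1)] by blast
      have "x \<in> frontier g1" using g1 x by (auto simp: tri_edges_def)
      then have "x \<in> closure ins2" using g1i closure_mono frontier_subset_closure by blast
      moreover have "x \<in> K" using x e1L1 by (auto simp: K_def I1_def img_def)
      ultimately have "x \<in> I2 \<union> IP" using cl2 insK iKK by blast
      then show False
        using img_edge[OF pg E1(2), of x e1] img_edge[OF pg E1(3), of x e1] x e12E e1L2 e1P
        by (auto simp: I2_def IP_def)
    qed
    then show ?thesis using gprops[OF g1(1)] by blast
  qed
  have g2s: "\<not> g2 \<subseteq> ins1"
  proof
    assume g2i: "g2 \<subseteq> ins1"
    obtain x where x: "x \<in> path_image (emb e2)" "x \<notin> V" using pg_mid[OF pg e12E(2)] by blast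
    have "x \<in> frontier g2" using g2 x by (auto simp: tri_edges_def)
    then have "x \<in> closure ins1" using g2i closure_mono frontier_subset_closure by blast
    moreover have "x \<in> K" using x e2L2 by (auto simp: K_def I2_def img_def)
    ultimately have "x \<in> I1 \<union> IP" using cl1 insK iKK by blast
    then show False
      using img_edge[OF pg E1(1), of x e2] img_edge[OF pg E1(3), of x e2] x e12E e2L1 e1P
      by (auto simp: I1_def IP_def)
  qed
  obtain f1 where f1: "facial_triangle V E emb f1" "e0 \<in> tri_edges E emb f1" "R\<^sup>*\<^sup>* f1 g1"
    using g1(1) unfolding Cls_def by blast
  obtain f2 where f2: "facial_triangle V E emb f2" "e0 \<in> tri_edges E emb f2" "R\<^sup>*\<^sup>* f2 g2"
    using g2(1) unfolding Cls_def by blast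
  have C1: "Cls f1" "Cls f2" using f1 f2 unfolding Cls_def by blast+
  have "R\<^sup>*\<^sup>* f1 f2"
  proof (cases "f1 = f2")
    case True then show ?thesis by simp
  next
    case False
    then have "R f1 f2" using f1 f2 unfolding R_def ft_adj_def by blast
    then show ?thesis by simp
  qed
  then have "f1 \<subseteq> ins1 \<longleftrightarrow> f2 \<subseteq> ins1" using inv C1 by blast
  moreover have "f1 \<subseteq> ins1" using inv[OF f1(3) C1(1)] g1s by blast
  moreover have "\<not> f2 \<subseteq> ins1" using inv[OF f2(3) C1(2)] g2s by blast
  ultimately show False by blast
qed

theorem lemma2p3:
  fixes V :: "complex set" and E :: "complex set set" and emb :: "complex set \<Rightarrow> real \<Rightarrow> complex"
    and VB :: "complex set" and EB :: "complex set set" and Out :: "complex set"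
    and cs :: "complex list" and ps :: "complex list"
  assumes "plane_graph V E emb"
    and "two_connected V E"
    and "triangular_block V E emb VB EB"
    and "Out \<in> faces emb VB EB" and "\<not> bounded Out"
    and "Out \<notin> faces emb V E"
    and "is_cycle EB cs" and "set cs \<subseteq> VB"
    and "drawing emb (set cs) (cyc_edges cs) = frontier Out"
    and "is_H_path EB (set cs) (cyc_edges cs) ps"
  shows "\<exists>e\<in>path_edges ps. \<exists>f1 f2. f1 \<noteq> f2 \<and> facial_triangle V E emb f1 \<and> facial_triangle V E emb f2
            \<and> e \<in> tri_edges E emb f1 \<and> e \<in> tri_edges E emb f2"
proof -
  note pg = assms(1)
  have csd: "distinct cs" and csl: "3 \<le> length cs" and cse: "cyc_edges cs \<subseteq> EB"
    using assms(7) by (simp_all add: is_cycle_def)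
  have psd: "distinct ps" and psl: "2 \<le> length ps" and pse: "path_edges ps \<subseteq> EB"
    and psa: "hd ps \<in> set cs" and psb: "last ps \<in> set cs"
    and psint: "\<And>i. 0 < i \<Longrightarrow> i < length ps - 1 \<Longrightarrow> ps ! i \<notin> set cs"
    and psdisj: "path_edges ps \<inter> cyc_edges cs = {}"
    using assms(10) by (simp_all add: is_H_path_def is_path_def)
  have pscs: "set ps \<inter> set cs \<subseteq> {hd ps, last ps}"
  proof
    fix x assume x: "x \<in> set ps \<inter> set cs"
    then obtain i where i: "i < length ps" "ps ! i = x" by (auto simp: in_set_conv_nth)
    have "ps \<noteq> []" using psl by auto
    show "x \<in> {hd ps, last ps}"
    proof (cases "i = 0")
      case True then show ?thesis using i \<open>ps \<noteq> []\<close> by (simp add: hd_conv_nth)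
    next
      case False
      show ?thesis
      proof (cases "i = length ps - 1")
        case True then show ?thesis using i \<open>ps \<noteq> []\<close> by (simp add: last_conv_nth)
      next
        case False
        then have "ps ! i \<notin> set cs" using psint[of i] \<open>i \<noteq> 0\<close> i by simp
        then show ?thesis using x i by simp
      qed
    qed
  qed
  obtain e0 where e0: "e0 \<in> E" "EB = block_edges V E emb e0" "VB = \<Union>EB"
    using assms(3) by (auto simp: triangular_block_def)
  have tri: "\<exists>f. facial_triangle V E emb f \<and> e0 \<in> tri_edges E emb f"
  proof (rule ccontr)
    have csne: "cs \<noteq> []" using csl by auto
    assume "\<not> ?thesis"
    then have EB1: "EB = {e0}" using e0 by (simp add: block_edges_def)
    have m: "{cs ! k, cs ! ((k+1) mod length cs)} \<in> cyc_edges cs" if "k < length cs" for k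
      using that unfolding cyc_edges_def by blast
    have "{cs ! 0, cs ! 1} \<in> cyc_edges cs" "{cs ! 1, cs ! 2} \<in> cyc_edges cs"
      using m[of 0] m[of 1] csl csne by (auto simp: numeral_2_eq_2)
    then have "{cs ! 0, cs ! 1} = e0" "{cs ! 1, cs ! 2} = e0" using cse EB1 csl by auto
    then have "{cs ! 0, cs ! 1} = {cs ! 1, cs ! 2}" by simp
    moreover have "cs ! 0 \<noteq> cs ! 1" using nth_eq_iff_index_eq[OF csd, of 0 1] csl csne by simp
    moreover have "cs ! 0 \<noteq> cs ! 2" using nth_eq_iff_index_eq[OF csd, of 0 2] csl csne by simp
    ultimately show False by (auto simp: doubleton_eq_iff)
  qed
  have EBdef: "EB = \<Union>{tri_edges E emb f' | f'. \<exists>f. facial_triangle V E emb f \<and> e0 \<in> tri_edges E emb f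
                                          \<and> (ft_adj V E emb)\<^sup>*\<^sup>* f f'}"
    using e0 tri by (simp add: block_edges_def)
  have EBE: "EB \<subseteq> E" using EBdef by (auto simp: tri_edges_def)
  have VBV: "VB \<subseteq> V" using e0(3) EBE pg_edge(4)[OF pg] by blast
  obtain i where i: "i < length cs" "cs ! i = hd ps" using psa by (auto simp: in_set_conv_nth)
  define cs' where "cs' = rotate i cs"
  have cs'0: "cs' ! 0 = hd ps"
  proof -
    have "cs \<noteq> []" using i by auto
    then show ?thesis using i nth_rotate[of 0 cs i] by (simp add: cs'_def)
  qed
  have cs'p: "distinct cs'" "3 \<le> length cs'" "set cs' = set cs" "cyc_edges cs' = cyc_edges cs"
    using csd csl by (simp_all add: cs'_def cyc_edges_rotate)
  show ?thesis
  proof (rule core[OF pg EBE VBV e0(3) EBdef assms(4,5,6) cs'p(1,2), of "hd ps" ps "last ps"])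
    show "cyc_edges cs' \<subseteq> EB" using cs'p cse by simp
    show "cs' ! 0 = hd ps" by (rule cs'0)
    show "set cs' \<subseteq> V" using cs'p assms(8) VBV by simp
    show "drawing emb (set cs') (cyc_edges cs') = frontier Out" using cs'p assms(9) by simp
    show "distinct ps" "2 \<le> length ps" "path_edges ps \<subseteq> EB" "hd ps = hd ps" "last ps = last ps"
      using psd psl pse by simp_all
    show "last ps \<in> set cs'" using psb cs'p by simp
    show "set ps \<inter> set cs' \<subseteq> {hd ps, last ps}" using pscs cs'p by simp
    show "path_edges ps \<inter> cyc_edges cs' = {}" using psdisj cs'p by simp
  qed
qed

end
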